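(* Let $f:\mathbb{Z}_+^E\to\mathbb{R}_{\ge0}$ be non-negative and DR-submodular, $k$ a positive integer and $\alpha\in(0,1)$. Let $\mathbf{x},\mathbf{y}$ be the two vectors held by Algorithm FastDrSub$(f,E,k,\alpha)$ at the end of its main loop (step 3, before trimming). Let $\mathbf{o}$ be an optimal solution of the DrSMC problem and let $\mathbf{o}_1\in\mathbb{Z}_+^E$ be defined by $\mathbf{o}_1(e)=\mathbf{o}(e)$ if $\mathbf{o}(e)\le\alpha k$ and $\mathbf{o}_1(e)=0$ otherwise. Then $$f(\mathbf{o}_1\vee\mathbf{x})+f(\mathbf{o}_1\vee\mathbf{y})\le 4\big(f(\mathbf{x})+f(\mathbf{y})\big).$$
   Context: Notation: $E$ is a finite ground set of size $n$; $\mathbf{1}_e$ is the $e$-th unit vector; $\mathbf{x}\le\mathbf{y}$ is coordinatewise; $\vee,\wedge$ are coordinatewise max/min; $\|\mathbf{x}\|_1=\sum_{e}\mathbf{x}(e)$; $f(\mathbf{a}\mid\mathbf{b}):=f(\mathbf{a}+\mathbf{b})-f(\mathbf{b})$. $f$ is DR-submodular if $f(\mathbf{x}+\mathbf{1}_e)-f(\mathbf{x})\ge f(\mathbf{y}+\mathbf{1}_e)-f(\mathbf{y})$ for all $\mathbf{x}\le\mathbf{y}$ and $e\in E$. DrSMC problem: maximize $f(\mathbf{x})$ over $\mathbf{x}\in\mathbb{Z}_+^E$ subject to $\|\mathbf{x}\|_1\le k$ and $\mathbf{0}\le\mathbf{x}\le k\cdot\mathbf{1}$; $\mathsf{opt}$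 denotes its optimal value. Algorithm FastDrSub$(f,E,k,\alpha)$ (elements of $E$ are processed in a fixed order): 1. Compute $(d_{\max},e_{\max})\in\arg\max\{f(d\mathbf{1}_e): e\in E,\ d\in\mathbb{Z},\ \alpha k<d\le k\}$. 2. Set $\mathbf{x}\leftarrow\mathbf{0}$, $\mathbf{y}\leftarrow\mathbf{0}$. 3. For each $e\in E$ in order: let $d_{(\mathbf{x},e)}=\max\{d\in\mathbb{Z}: 0<d\le\alpha k,\ f(\mathbf{1}_e\mid\mathbf{x}+(d-1)\mathbf{1}_e)\ge f(\mathbf{x})/k\}$ and $d_{(\mathbf{y},e)}=\max\{d\in\mathbb{Z}: 0<d\le\alpha k,\ f(\mathbf{1}_e\mid\mathbf{y}+(d-1)\mathbf{1}_e)\ge f(\mathbf{y})/k\}$ (each computed by binary search on $d$, and taken to be $0$ if the set is empty). If $f(d_{(\mathbf{x},e)}\mathbf{1}_e\mid\mathbf{x})\ge f(d_{(\mathbf{y},e)}\mathbf{1}_e\mid\mathbf{y})$, set $\mathbf{x}\leftarrow\mathbf{x}+d_{(\mathbf{x},e)}\mathbf{1}_e$; otherwise set $\mathbf{y}\leftarrow\mathbf{y}+d_{(\mathbf{y},e)}\mathbf{1}_e$. 4. (Trimming) Let $e_1,e_2,\dots$ be the elements of $\{e:\mathbf{x}(e)>0\}$ listed in reverse order of their addition to $\mathbf{x}$ (most recent first) and $\mathbf{x}_t=\sum_{i=1}^t\mathbf{x}(e_i)\mathbf{1}_{e_i}$; let $\mathbf{x}'=\mathbf{x}_t$ for the largest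 $t$ with $\|\mathbf{x}_t\|_1\le k$. Define $\mathbf{y}'$ from $\mathbf{y}$ in the same way. 5. Return $\mathbf{z}\in\arg\max\{f(\mathbf{t}):\mathbf{t}\in\{\mathbf{x}',\mathbf{y}',d_{\max}\mathbf{1}_{e_{\max}}\}\}$. *)

theory Defs
  imports Complex_Main
begin

text \<open>Vectors in Z_+^E are functions 'a => nat that vanish outside E.\<close>

definition supp_in :: "'a set \<Rightarrow> ('a \<Rightarrow> nat) \<Rightarrow> bool" where
  "supp_in E x \<longleftrightarrow> (\<forall>a. a \<notin> E \<longrightarrow> x a = 0)"

definition incr :: "('a \<Rightarrow> nat) \<Rightarrow> 'a \<Rightarrow> nat \<Rightarrow> ('a \<Rightarrow> nat)" where
  "incr x e d = x(e := x e + d)"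

definition nonneg_on :: "'a set \<Rightarrow> (('a \<Rightarrow> nat) \<Rightarrow> real) \<Rightarrow> bool" where
  "nonneg_on E f \<longleftrightarrow> (\<forall>x. supp_in E x \<longrightarrow> 0 \<le> f x)"

definition dr_submodular :: "'a set \<Rightarrow> (('a \<Rightarrow> nat) \<Rightarrow> real) \<Rightarrow> bool" where
  "dr_submodular E f \<longleftrightarrow>
     (\<forall>x y e. supp_in E x \<longrightarrow> supp_in E y \<longrightarrow> x \<le> y \<longrightarrow> e \<in> E \<longrightarrow>
        f (incr x e 1) - f x \<ge> f (incr y e 1) - f y)"

definition feasible :: "'a set \<Rightarrow> nat \<Rightarrow> ('a \<Rightarrow> nat) \<Rightarrow> bool" where
  "feasible E k x \<longleftrightarrow> supp_in E x \<and> (\<Sum>e\<in>E. x e) \<le> k \<and> (\<forall>e. x e \<le> k)"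

definition is_opt :: "'a set \<Rightarrow> (('a \<Rightarrow> nat) \<Rightarrow> real) \<Rightarrow> nat \<Rightarrow> ('a \<Rightarrow> nat) \<Rightarrow> bool" where
  "is_opt E f k ov \<longleftrightarrow> feasible E k ov \<and> (\<forall>t. feasible E k t \<longrightarrow> f t \<le> f ov)"

definition dsel :: "(('a \<Rightarrow> nat) \<Rightarrow> real) \<Rightarrow> nat \<Rightarrow> real \<Rightarrow> ('a \<Rightarrow> nat) \<Rightarrow> 'a \<Rightarrow> nat" where
  "dsel f k \<alpha> x e =
     (let S = {d::nat. 0 < d \<and> real d \<le> \<alpha> * real k \<and>
                f (incr x e d) - f (incr x e (d - 1)) \<ge> f x / real k}
      in if S = {} then 0 else Max S)"

definition fds_step :: "(('a \<Rightarrow> nat) \<Rightarrow> real) \<Rightarrow> nat \<Rightarrow> real \<Rightarrow> 'a \<Rightarrow>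
    ('a \<Rightarrow> nat) \<times> ('a \<Rightarrow> nat) \<Rightarrow> ('a \<Rightarrow> nat) \<times> ('a \<Rightarrow> nat)" where
  "fds_step f k \<alpha> e p =
     (let x = fst p; y = snd p; dx = dsel f k \<alpha> x e; dy = dsel f k \<alpha> y e in
      if f (incr x e dx) - f x \<ge> f (incr y e dy) - f y
      then (incr x e dx, y) else (x, incr y e dy))"

text \<open>The pair (x, y) at the end of the main loop, elements processed in the order of the list es.\<close>
definition fds_main :: "(('a \<Rightarrow> nat) \<Rightarrow> real) \<Rightarrow> 'a list \<Rightarrow> nat \<Rightarrow> real \<Rightarrow>
    ('a \<Rightarrow> nat) \<times> ('a \<Rightarrow> nat)" where
  "fds_main f es k \<alpha> = fold (fds_step f k \<alpha>) es (\<lambda>_. 0, \<lambda>_. 0)"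

definition vjoin :: "('a \<Rightarrow> nat) \<Rightarrow> ('a \<Rightarrow> nat) \<Rightarrow> ('a \<Rightarrow> nat)" where
  "vjoin u v = (\<lambda>a. max (u a) (v a))"

end

theory Submission
  imports Defs
begin


lemma incr_incr: "incr (incr x e a) e b = incr x e (a + b)"
  by (simp add: incr_def fun_eq_iff)

lemma incr_0[simp]: "incr x e 0 = x"
  by (simp add: incr_def)

lemma supp_incr: "supp_in E x \<Longrightarrow> e \<in> E \<Longrightarrow> supp_in E (incr x e d)"
  by (auto simp: supp_in_def incr_def)

lemma incr_mono: "x \<le> y \<Longrightarrow> incr x e d \<le> incr y e d"
  by (auto simp: le_fun_def incr_def)

lemma le_incr: "x \<le> incr x e d"
  by (auto simp: le_fun_def incr_def)

lemma tele_le: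
  fixes g :: "nat \<Rightarrow> real"
  assumes "a \<le> b" "\<And>j. a < j \<Longrightarrow> j \<le> b \<Longrightarrow> g j - g (j - 1) \<le> c"
  shows "g b - g a \<le> real (b - a) * c"
  using assms
proof (induction b)
  case 0
  then show ?case by simp
next
  case (Suc b)
  show ?case
  proof (cases "a = Suc b")
    case True then show ?thesis by simp
  next
    case False
    then have ab: "a \<le> b" using Suc.prems by simp
    have "g b - g a \<le> real (b - a) * c" using Suc ab by auto
    moreover have "g (Suc b) - g b \<le> c" using Suc.prems(2)[of "Suc b"] ab by simp
    moreover have "real (Suc b - a) = real (b - a) + 1" using ab by (simp add: Suc_diff_le)
    ultimately show ?thesis by (simp add: algebra_simps)
  qed
qed

lemma tele_ge:
  fixes g :: "nat \<Rightarrow> real"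
  assumes "a \<le> b" "\<And>j. a < j \<Longrightarrow> j \<le> b \<Longrightarrow> g j - g (j - 1) \<ge> c"
  shows "g b - g a \<ge> real (b - a) * c"
proof -
  have "(\<lambda>j. - g j) b - (\<lambda>j. - g j) a \<le> real (b - a) * (- c)"
    by (rule tele_le) (use assms in force)+
  then show ?thesis by simp
qed

context
  fixes E :: "'a set" and f :: "('a \<Rightarrow> nat) \<Rightarrow> real" and k :: nat and \<alpha> :: real
  assumes dr: "dr_submodular E f" and nn: "nonneg_on E f" and kpos: "0 < k"
    and apos: "0 < \<alpha>" and alt: "\<alpha> < 1"
begin

lemma dr1: "supp_in E u \<Longrightarrow> supp_in E w \<Longrightarrow> u \<le> w \<Longrightarrow> e \<in> E \<Longrightarrow>
    f (incr w e 1) - f w \<le> f (incr u e 1) - f u"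
  using dr unfolding dr_submodular_def by blast

lemma dr_multi:
  assumes "supp_in E u" "supp_in E w" "u \<le> w" "e \<in> E"
  shows "f (incr w e d) - f w \<le> f (incr u e d) - f u"
proof (induction d)
  case 0
  then show ?case by simp
next
  case (Suc d)
  have "f (incr (incr w e d) e 1) - f (incr w e d) \<le> f (incr (incr u e d) e 1) - f (incr u e d)"
    by (rule dr1) (use assms supp_incr incr_mono in auto)
  then show ?case using Suc.IH by (simp add: incr_incr)
qed

lemma mg_le:
  assumes "supp_in E u" "supp_in E w" "u \<le> w" "e \<in> E" "0 < j"
  shows "f (incr w e j) - f (incr w e (j - 1)) \<le> f (incr u e j) - f (incr u e (j - 1))"
proof -
  have "f (incr (incr w e (j-1)) e 1) - f (incr w e (j-1)) \<le> f (incr (incr u e (j-1)) e 1) - f (incr u e (j-1))"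
    by (rule dr1) (use assms supp_incr incr_mono in auto)
  then show ?thesis using assms(5) by (simp add: incr_incr)
qed

lemma mg_anti:
  assumes "supp_in E u" "e \<in> E" "0 < j" "j \<le> d"
  shows "f (incr u e d) - f (incr u e (d - 1)) \<le> f (incr u e j) - f (incr u e (j - 1))"
proof -
  have "f (incr (incr u e (d - j)) e j) - f (incr (incr u e (d - j)) e (j - 1)) \<le> f (incr u e j) - f (incr u e (j - 1))"
    by (rule mg_le) (use assms supp_incr le_incr in auto)
  moreover have "d - j + j = d" "d - j + (j - 1) = d - 1" using assms by auto
  ultimately show ?thesis by (simp add: incr_incr)
qed

lemma dsel_props:
  assumes "d = dsel f k \<alpha> u e"
  shows "real d \<le> \<alpha> * real k"
    and "\<And>j. 0 < j \<Longrightarrow> real j \<le> \<alpha> * real k \<Longrightarrow> f (incr u e j) - f (incr u e (j - 1)) \<ge> f u / real k \<Longrightarrow> j \<le> d"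
    and "0 < d \<Longrightarrow> f (incr u e d) - f (incr u e (d - 1)) \<ge> f u / real k"
proof -
  define S where "S = {d::nat. 0 < d \<and> real d \<le> \<alpha> * real k \<and>
                f (incr u e d) - f (incr u e (d - 1)) \<ge> f u / real k}"
  have dS: "d = (if S = {} then 0 else Max S)" using assms unfolding dsel_def Let_def S_def by presburger
  have ak: "\<alpha> * real k \<le> 1 * real k" by (rule mult_right_mono) (use alt in auto)
  have "S \<subseteq> {..k}"
  proof
    fix d assume "d \<in> S"
    then have "real d \<le> real k" using ak by (simp add: S_def)
    then show "d \<in> {..k}" by simp
  qed
  then have fin: "finite S" by (rule finite_subset) simp
  show "real d \<le> \<alpha> * real k"
  proof (cases "S = {}")
    case True then show ?thesis using dS apos kpos by simp
  next
    case False then have "Max S \<in> S" using fin by simp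
    then have "d \<in> S" using dS False by simp
    then show ?thesis unfolding S_def by simp
  qed
  show "j \<le> d" if "0 < j" "real j \<le> \<alpha> * real k" "f (incr u e j) - f (incr u e (j - 1)) \<ge> f u / real k" for j
  proof -
    have "j \<in> S" using that by (simp add: S_def)
    then have "S \<noteq> {}" by auto
    then show ?thesis using dS fin \<open>j \<in> S\<close> by simp
  qed
  show "f (incr u e d) - f (incr u e (d - 1)) \<ge> f u / real k" if "0 < d"
  proof -
    have "S \<noteq> {}" using dS that by auto
    then have "Max S \<in> S" using fin by simp
    then have "d \<in> S" using dS \<open>S \<noteq> {}\<close> by simp
    then show ?thesis unfolding S_def by simp
  qed
qed


lemma fnn: "supp_in E u \<Longrightarrow> 0 \<le> f u"
  using nn by (simp add: nonneg_on_def)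

lemma dsel_low:
  assumes "d = dsel f k \<alpha> u e" "supp_in E u" "e \<in> E" "0 < j" "j \<le> d"
  shows "f (incr u e j) - f (incr u e (j - 1)) \<ge> f u / real k"
proof -
  have "f (incr u e d) - f (incr u e (d - 1)) \<ge> f u / real k"
    using dsel_props(3)[OF assms(1)] assms by simp
  then show ?thesis using mg_anti[OF assms(2,3,4,5)] by linarith
qed

lemma dsel_mono:
  assumes "d = dsel f k \<alpha> u e" "supp_in E u" "e \<in> E" "m \<le> d"
  shows "f (incr u e m) \<le> f (incr u e d)"
proof -
  have c: "0 \<le> f u / real k" using fnn[OF assms(2)] by simp
  have "(\<lambda>j. f (incr u e j)) d - (\<lambda>j. f (incr u e j)) m \<ge> real (d - m) * (f u / real k)"
    by (rule tele_ge) (use assms(4) dsel_low[OF assms(1,2,3)] in auto)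
  moreover have "0 \<le> real (d - m) * (f u / real k)" using c by (intro mult_nonneg_nonneg) simp_all
  ultimately show ?thesis by simp
qed

lemma tail_step:
  assumes "d = dsel f k \<alpha> u e" "supp_in E u" "supp_in E w" "u \<le> w" "e \<in> E"
    "d < j" "real j \<le> \<alpha> * real k"
  shows "f (incr w e j) - f (incr w e (j - 1)) \<le> f u / real k"
proof -
  have "f (incr u e j) - f (incr u e (j - 1)) < f u / real k"
    using dsel_props(2)[OF assms(1), of j] assms(6,7) by force
  then show ?thesis using mg_le[OF assms(2,3,4,5), of j] assms(6) by linarith
qed

lemma elem_added:
  assumes "d = dsel f k \<alpha> u e" "supp_in E u" "e \<in> E" "u e = 0"
    "supp_in E x'" "incr u e d \<le> x'" "x' e = d" "f u \<le> f x'" "real oe \<le> \<alpha> * real k"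
  shows "f (incr x' e (oe - x' e)) - f x' \<le> real oe * f x' / real k"
proof -
  define w where "w = x'(e := 0)"
  have ws: "supp_in E w" using assms(5) by (simp add: w_def supp_in_def)
  have uw: "u \<le> w"
  proof (rule le_funI)
    fix a show "u a \<le> w a"
    proof (cases "a = e")
      case True then show ?thesis using assms(4) by (simp add: w_def)
    next
      case False then show ?thesis using assms(6) by (auto simp: w_def le_fun_def incr_def dest: spec[of _ a])
    qed
  qed
  have xw: "x' = incr w e d" using assms(7) by (auto simp: w_def incr_def fun_eq_iff)
  have fu: "0 \<le> f u" using fnn[OF assms(2)] .
  have fx: "0 \<le> f x'" using fnn[OF assms(5)] .
  show ?thesis
  proof (cases "oe \<le> d")
    case True
    then show ?thesis using assms(7) fx by simp
  next
    case False
    have "incr x' e (oe - x' e) = incr w e oe" using xw assms(7) False by (simp add: incr_incr)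
    moreover have "(\<lambda>j. f (incr w e j)) oe - (\<lambda>j. f (incr w e j)) d \<le> real (oe - d) * (f u / real k)"
    proof (rule tele_le)
      show "d \<le> oe" using False by simp
      fix j assume "d < j" "j \<le> oe"
      then have "real j \<le> \<alpha> * real k" using assms(9) by linarith
      then show "f (incr w e j) - f (incr w e (j - 1)) \<le> f u / real k"
        using tail_step[OF assms(1,2) ws uw assms(3) \<open>d < j\<close>] by simp
    qed
    moreover have "real (oe - d) * (f u / real k) \<le> real oe * (f x' / real k)"
      by (rule mult_mono) (use fu assms(8) kpos in \<open>auto simp: divide_right_mono\<close>)
    ultimately show ?thesis using xw by simp
  qed
qed

lemma elem_notadded:
  assumes "d = dsel f k \<alpha> u e" "supp_in E u" "e \<in> E" "u e = 0"
    "supp_in E x'" "u \<le> x'" "x' e = 0" "f u \<le> f x'" "real oe \<le> \<alpha> * real k"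
  shows "f (incr x' e (oe - x' e)) - f x' \<le> real oe * f x' / real k + (f (incr u e d) - f u)"
proof -
  define m where "m = min oe d"
  have fu: "0 \<le> f u" using fnn[OF assms(2)] .
  have fx: "0 \<le> f x'" using fnn[OF assms(5)] .
  have 1: "f (incr x' e m) - f x' \<le> f (incr u e d) - f u"
    using dr_multi[OF assms(2,5,6,3), of m] dsel_mono[OF assms(1,2,3), of m] by (simp add: m_def)
  have "(\<lambda>j. f (incr x' e j)) oe - (\<lambda>j. f (incr x' e j)) m \<le> real (oe - m) * (f u / real k)"
  proof (rule tele_le)
    show "m \<le> oe" by (simp add: m_def)
    fix j assume "m < j" "j \<le> oe"
    then have "d < j" by (auto simp: m_def)
    have "real j \<le> \<alpha> * real k" using assms(9) \<open>j \<le> oe\<close> by linarith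
    then show "f (incr x' e j) - f (incr x' e (j - 1)) \<le> f u / real k"
      using tail_step[OF assms(1,2,5,6,3) \<open>d < j\<close>] by simp
  qed
  moreover have "real (oe - m) * (f u / real k) \<le> real oe * (f x' / real k)"
    by (rule mult_mono) (use fu assms(8) kpos in \<open>auto simp: divide_right_mono\<close>)
  ultimately show ?thesis using 1 assms(7) by simp
qed


definition side_ok :: "'a set \<Rightarrow> ('a \<Rightarrow> nat) \<Rightarrow> ('a \<Rightarrow> nat) \<Rightarrow> real \<Rightarrow> bool" where
  "side_ok A ov x g \<longleftrightarrow> (\<forall>x'. supp_in E x' \<longrightarrow> x \<le> x' \<longrightarrow> (\<forall>a\<in>A. x' a = x a) \<longrightarrow> f x \<le> f x' \<longrightarrow>
     (\<Sum>a\<in>A. f (incr x' a (ov a - x' a)) - f x') \<le> real (\<Sum>a\<in>A. ov a) * f x' / real k + g)"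

lemma side_okD:
  assumes "side_ok A ov x g" "supp_in E x" "\<forall>a\<in>A. x a = x a"
  shows "(\<Sum>a\<in>A. f (incr x a (ov a - x a)) - f x) \<le> real (\<Sum>a\<in>A. ov a) * f x / real k + g"
  using assms unfolding side_ok_def by blast

lemma step_side:
  assumes IH: "side_ok (set L) ov xo (go - f (\<lambda>_. 0))"
    and e: "e \<notin> set L" "e \<in> E" and s0: "supp_in (set L) xo" "set L \<subseteq> E"
    and o: "\<forall>a. real (ov a) \<le> \<alpha> * real k"
    and add: "x = incr xo e (dsel f k \<alpha> xo e) \<and> g = go \<or>
              x = xo \<and> g - go \<ge> f (incr xo e (dsel f k \<alpha> xo e)) - f xo"
  shows "side_ok (set (L @ [e])) ov x (g - f (\<lambda>_. 0))"
  unfolding side_ok_def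
proof (intro allI impI)
  fix x' assume xs: "supp_in E x'" and xx: "x \<le> x'" and ag: "\<forall>a\<in>set (L @ [e]). x' a = x a"
    and fxx: "f x \<le> f x'"
  define dx where "dx = dsel f k \<alpha> xo e"
  have xos: "supp_in E xo" using s0 by (auto simp: supp_in_def)
  have xoe: "xo e = 0" using s0 e by (simp add: supp_in_def)
  have xox: "xo \<le> x" using add le_incr by auto
  have fxox: "f xo \<le> f x" using add dsel_mono[OF dx_def xos e(2), of 0] by (auto simp: dx_def)
  have agx: "\<forall>a\<in>set L. x a = xo a" using add e(1) by (auto simp: incr_def)
  have IH': "(\<Sum>a\<in>set L. f (incr x' a (ov a - x' a)) - f x') \<le> real (\<Sum>a\<in>set L. ov a) * f x' / real k + (go - f (\<lambda>_. 0))"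
    using IH xs xox xx ag agx fxx fxox unfolding side_ok_def by (metis (no_types, lifting) Un_iff order_trans set_append)
  have Te: "f (incr x' e (ov e - x' e)) - f x' \<le> real (ov e) * f x' / real k + (g - go)"
  proof (cases "x = incr xo e dx \<and> g = go")
    case True
    have "f (incr x' e (ov e - x' e)) - f x' \<le> real (ov e) * f x' / real k"
      by (rule elem_added[OF dx_def xos e(2) xoe xs]) (use True xx ag xoe fxox fxx o in \<open>auto simp: incr_def\<close>)
    then show ?thesis using True by simp
  next
    case False
    then have F: "x = xo" "g - go \<ge> f (incr xo e dx) - f xo" using add dx_def by auto
    have "f (incr x' e (ov e - x' e)) - f x' \<le> real (ov e) * f x' / real k + (f (incr xo e dx) - f xo)"
      by (rule elem_notadded[OF dx_def xos e(2) xoe xs]) (use F xx ag xoe fxox fxx o in auto)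
    then show ?thesis using F by linarith
  qed
  have set_eq: "set (L @ [e]) = insert e (set L)" by simp
  have fin: "finite (set L)" by simp
  have "(\<Sum>a\<in>set (L @ [e]). f (incr x' a (ov a - x' a)) - f x') =
        (f (incr x' e (ov e - x' e)) - f x') + (\<Sum>a\<in>set L. f (incr x' a (ov a - x' a)) - f x')"
    unfolding set_eq using fin e(1) by (rule sum.insert)
  moreover have "real (\<Sum>a\<in>set (L @ [e]). ov a) * f x' / real k =
        real (ov e) * f x' / real k + real (\<Sum>a\<in>set L. ov a) * f x' / real k"
    unfolding set_eq using fin e(1) by (simp add: sum.insert algebra_simps add_divide_distrib)
  ultimately show "(\<Sum>a\<in>set (L @ [e]). f (incr x' a (ov a - x' a)) - f x')
         \<le> real (\<Sum>a\<in>set (L @ [e]). ov a) * f x' / real k + (g - f (\<lambda>_. 0))"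
    using IH' Te by linarith
qed

lemma invariant:
  assumes "distinct L" "set L \<subseteq> E" "fold (fds_step f k \<alpha>) L (\<lambda>_. 0, \<lambda>_. 0) = (x, y)"
    and o: "\<forall>a. real (ov a) \<le> \<alpha> * real k"
  shows "supp_in (set L) x \<and> supp_in (set L) y \<and>
         side_ok (set L) ov x (f y - f (\<lambda>_. 0)) \<and> side_ok (set L) ov y (f x - f (\<lambda>_. 0))"
  using assms(1,2,3)
proof (induction L arbitrary: x y rule: rev_induct)
  case Nil
  then show ?case by (auto simp: supp_in_def side_ok_def)
next
  case (snoc e L)
  obtain x0 y0 where f0: "fold (fds_step f k \<alpha>) L (\<lambda>_. 0, \<lambda>_. 0) = (x0, y0)" by fastforce
  have eL: "e \<notin> set L" "distinct L" using snoc.prems by auto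
  have eE: "e \<in> E" "set L \<subseteq> E" using snoc.prems by auto
  note IH = snoc.IH[OF eL(2) eE(2) f0]
  have xy: "(x, y) = fds_step f k \<alpha> e (x0, y0)" using snoc.prems(3) f0 by simp
  define dx where "dx = dsel f k \<alpha> x0 e"
  define dy where "dy = dsel f k \<alpha> y0 e"
  have supp: "supp_in (set (L @ [e])) (incr x0 e d)" "supp_in (set (L @ [e])) (incr y0 e d)"
     "supp_in (set (L @ [e])) x0" "supp_in (set (L @ [e])) y0" for d
    using IH by (auto simp: supp_in_def incr_def)
  show ?case
  proof (cases "f (incr x0 e dx) - f x0 \<ge> f (incr y0 e dy) - f y0")
    case True
    then have X: "x = incr x0 e dx" "y = y0" using xy by (simp_all add: fds_step_def Let_def dx_def dy_def)
    show ?thesis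
    proof (intro conjI)
      show "side_ok (set (L @ [e])) ov x (f y - f (\<lambda>_. 0))"
        by (rule step_side[where xo=x0 and go="f y0"]) (use supp X IH eL eE o True in \<open>auto simp: dx_def dy_def\<close>)
      show "side_ok (set (L @ [e])) ov y (f x - f (\<lambda>_. 0))"
        by (rule step_side[where xo=y0 and go="f x0"]) (use supp X IH eL eE o True in \<open>auto simp: dx_def dy_def\<close>)
    qed (use supp X in auto)
  next
    case False
    then have X: "x = x0" "y = incr y0 e dy" using xy by (simp_all add: fds_step_def Let_def dx_def dy_def)
    show ?thesis
    proof (intro conjI)
      show "side_ok (set (L @ [e])) ov x (f y - f (\<lambda>_. 0))"
        by (rule step_side[where xo=x0 and go="f y0"]) (use supp X IH eL eE o False in \<open>auto simp: dx_def dy_def\<close>)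
      show "side_ok (set (L @ [e])) ov y (f x - f (\<lambda>_. 0))"
        by (rule step_side[where xo=y0 and go="f x0"]) (use supp X IH eL eE o False in \<open>auto simp: dx_def dy_def\<close>)
    qed (use supp X in auto)
  qed
qed

lemma decomp:
  assumes "finite E" "supp_in E x" "supp_in E ov"
  shows "f (vjoin ov x) - f x \<le> (\<Sum>a\<in>E. f (incr x a (ov a - x a)) - f x)"
proof -
  define z where "z A = (\<lambda>a. if a \<in> A then max (ov a) (x a) else x a)" for A
  have zs: "supp_in E (z A)" for A using assms by (auto simp: supp_in_def z_def)
  have xz: "x \<le> z A" for A by (auto simp: le_fun_def z_def)
  have "A \<subseteq> E \<Longrightarrow> f (z A) - f x \<le> (\<Sum>a\<in>A. f (incr x a (ov a - x a)) - f x)" for A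
    using finite_subset[OF _ assms(1)]
  proof (induction A rule: infinite_finite_induct)
    case (infinite A) then show ?case by auto
  next
    case empty
    have "z {} = x" by (simp add: z_def fun_eq_iff)
    then show ?case by simp
  next
    case (insert a A)
    have "z (insert a A) = incr (z A) a (ov a - x a)"
      using insert.hyps by (auto simp: z_def incr_def fun_eq_iff)
    moreover have "f (incr (z A) a (ov a - x a)) - f (z A) \<le> f (incr x a (ov a - x a)) - f x"
      by (rule dr_multi) (use assms zs xz insert.prems in auto)
    ultimately show ?case using insert by (simp add: sum.insert)
  qed
  note H = this
  have "z E = vjoin ov x" using assms by (auto simp: z_def vjoin_def fun_eq_iff supp_in_def)
  then show ?thesis using H[OF order_refl] by simp
qed

end

theorem lemma3:
  fixes f :: "('a \<Rightarrow> nat) \<Rightarrow> real" and es :: "'a list" and k :: nat and \<alpha> :: real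
    and x y ov ov1 :: "'a \<Rightarrow> nat"
  assumes "distinct es"
    and "nonneg_on (set es) f"
    and "dr_submodular (set es) f"
    and "0 < k"
    and "0 < \<alpha>" and "\<alpha> < 1"
    and "fds_main f es k \<alpha> = (x, y)"
    and "is_opt (set es) f k ov"
    and "\<And>e. ov1 e = (if real (ov e) \<le> \<alpha> * real k then ov e else 0)"
  shows "f (vjoin ov1 x) + f (vjoin ov1 y) \<le> 4 * (f x + f y)"
proof -
  let ?E = "set es"
  have fe: "feasible ?E k ov" using assms(8) by (simp add: is_opt_def)
  have ovs: "supp_in ?E ov" and ovk: "(\<Sum>e\<in>?E. ov e) \<le> k" using fe by (auto simp: feasible_def)
  have o: "\<forall>a. real (ov1 a) \<le> \<alpha> * real k" using assms(9) assms(4,5) by simp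
  have o1s: "supp_in ?E ov1" using ovs assms(9) by (simp add: supp_in_def)
  have "(\<Sum>e\<in>?E. ov1 e) \<le> (\<Sum>e\<in>?E. ov e)" by (rule sum_mono) (simp add: assms(9))
  then have o1k: "real (\<Sum>e\<in>?E. ov1 e) \<le> real k" using ovk by linarith
  have inv: "supp_in ?E x \<and> supp_in ?E y \<and>
         side_ok ?E f k ?E ov1 x (f y - f (\<lambda>_. 0)) \<and> side_ok ?E f k ?E ov1 y (f x - f (\<lambda>_. 0))"
    by (rule invariant[OF assms(3,2,4,5,6) assms(1) order_refl _ o])
       (use assms(7) in \<open>simp add: fds_main_def\<close>)
  have nn: "\<And>u. supp_in ?E u \<Longrightarrow> 0 \<le> f u" using assms(2) by (simp add: nonneg_on_def)
  have f0: "0 \<le> f (\<lambda>_. 0)" by (rule nn) (simp add: supp_in_def)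
  have fx: "0 \<le> f x" "0 \<le> f y" using inv nn by auto
  have kk: "real (\<Sum>e\<in>?E. ov1 e) * f u / real k \<le> f u" if "0 \<le> f u" for u
  proof -
    have "real (\<Sum>e\<in>?E. ov1 e) * f u \<le> real k * f u" by (rule mult_right_mono) (use o1k that in auto)
    then show ?thesis using assms(4) by (simp add: divide_le_eq mult.commute)
  qed
  have A: "(\<Sum>a\<in>?E. f (incr x a (ov1 a - x a)) - f x) \<le> real (\<Sum>a\<in>?E. ov1 a) * f x / real k + (f y - f (\<lambda>_. 0))"
    by (rule side_okD[OF assms(3,2,4,5,6)]) (use inv in auto)
  have B: "(\<Sum>a\<in>?E. f (incr y a (ov1 a - y a)) - f y) \<le> real (\<Sum>a\<in>?E. ov1 a) * f y / real k + (f x - f (\<lambda>_. 0))"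
    by (rule side_okD[OF assms(3,2,4,5,6)]) (use inv in auto)
  have C: "f (vjoin ov1 x) - f x \<le> (\<Sum>a\<in>?E. f (incr x a (ov1 a - x a)) - f x)"
    by (rule decomp[OF assms(3,2,4,5,6)]) (use inv o1s in auto)
  have D: "f (vjoin ov1 y) - f y \<le> (\<Sum>a\<in>?E. f (incr y a (ov1 a - y a)) - f y)"
    by (rule decomp[OF assms(3,2,4,5,6)]) (use inv o1s in auto)
  define P where "P = real (\<Sum>e\<in>?E. ov1 e) * f x / real k"
  define Q where "Q = real (\<Sum>e\<in>?E. ov1 e) * f y / real k"
  define SX where "SX = (\<Sum>a\<in>?E. f (incr x a (ov1 a - x a)) - f x)"
  define SY where "SY = (\<Sum>a\<in>?E. f (incr y a (ov1 a - y a)) - f y)"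
  have "f (vjoin ov1 x) - f x \<le> SX" "SX \<le> P + (f y - f (\<lambda>_. 0))" "P \<le> f x"
    "f (vjoin ov1 y) - f y \<le> SY" "SY \<le> Q + (f x - f (\<lambda>_. 0))" "Q \<le> f y"
    using A B C D kk[OF fx(1)] kk[OF fx(2)] unfolding P_def Q_def SX_def SY_def by simp_all
  then show ?thesis using f0 fx by (smt (verit))
qed

end
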